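(* Let $Q=A_2\otimes E_8$ and $R=\sqrt3E_8$. There exist isometric embeddings of $Q\perp R$ into $E_8^3=E_8\perp E_8\perp E_8$; in fact there are at least two kinds: (i) embeddings such that the image of $R$ is the fixed-point sublattice of an automorphism of order $3$ of $E_8^3$ which permutes the three direct summands cyclically; and (ii) embeddings such that $(\mathbb Q R)\cap E_8^3$ (the intersection of $E_8^3$ with the rational span of the image of $R$) is an orthogonal direct summand of $E_8^3$.
   Context: $A_2\otimes E_8$ is the tensor product of root lattices with product form; $\sqrt3E_8$ is the $E_8$ lattice with form scaled by 3. *)

theory Defs
  imports Complex_Main "HOL-Library.Function_Algebras"
begin

text \<open>Lattices are given in coordinates: a lattice of rank n is Z^n (vectors
  nat => int supported on {0..<n}) together with an integral Gram matrix.\<close>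

definition zvecs :: "nat \<Rightarrow> (nat \<Rightarrow> int) set" where
  "zvecs n = {v. \<forall>i\<ge>n. v i = 0}"

definition bform :: "(nat \<Rightarrow> nat \<Rightarrow> int) \<Rightarrow> nat \<Rightarrow> (nat \<Rightarrow> int) \<Rightarrow> (nat \<Rightarrow> int) \<Rightarrow> int" where
  "bform G n v w = (\<Sum>i<n. \<Sum>j<n. v i * G i j * w j)"

text \<open>Cartan (Gram) matrix of E8 w.r.t. simple roots, Bourbaki labelling
  (0-indexed: chain 0-2-3-4-5-6-7, node 1 attached to node 3).\<close>
definition e8_edge :: "nat \<Rightarrow> nat \<Rightarrow> bool" where
  "e8_edge i j = ({i, j} \<in> {{0,2},{1,3},{2,3},{3,4},{4,5},{5,6},{6,7}})"

definition gram_E8 :: "nat \<Rightarrow> nat \<Rightarrow> int" where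
  "gram_E8 i j = (if i = j then 2 else if e8_edge i j then -1 else 0)"

definition gram_A2 :: "nat \<Rightarrow> nat \<Rightarrow> int" where
  "gram_A2 i j = (if i = j then 2 else -1)"

text \<open>A2 \<otimes> E8 on Z^16, basis e_a \<otimes> f_k at index 8a+k (Kronecker product).\<close>
definition gram_Q :: "nat \<Rightarrow> nat \<Rightarrow> int" where
  "gram_Q i j = gram_A2 (i div 8) (j div 8) * gram_E8 (i mod 8) (j mod 8)"

definition gram_R :: "nat \<Rightarrow> nat \<Rightarrow> int" where
  "gram_R i j = 3 * gram_E8 i j"

definition gram_QR :: "nat \<Rightarrow> nat \<Rightarrow> int" where
  "gram_QR i j = (if i < 16 \<and> j < 16 then gram_Q i j
                  else if 16 \<le> i \<and> 16 \<le> j then gram_R (i - 16) (j - 16) else 0)"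

definition gram_E8_3 :: "nat \<Rightarrow> nat \<Rightarrow> int" where
  "gram_E8_3 i j = (if i div 8 = j div 8 then gram_E8 (i mod 8) (j mod 8) else 0)"

definition E8_3 :: "(nat \<Rightarrow> int) set" where
  "E8_3 = zvecs 24"

definition E8_3_summand :: "nat \<Rightarrow> (nat \<Rightarrow> int) set" where
  "E8_3_summand b = {v \<in> zvecs 24. \<forall>i. i div 8 \<noteq> b \<longrightarrow> v i = 0}"

definition QR_lattice :: "(nat \<Rightarrow> int) set" where
  "QR_lattice = zvecs 24"

definition R_part :: "(nat \<Rightarrow> int) set" where
  "R_part = {v \<in> zvecs 24. \<forall>i<16. v i = 0}"

definition isometric_embedding :: "((nat \<Rightarrow> int) \<Rightarrow> (nat \<Rightarrow> int)) \<Rightarrow> bool" where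
  "isometric_embedding f \<longleftrightarrow>
     f ` QR_lattice \<subseteq> E8_3 \<and>
     (\<forall>v\<in>QR_lattice. \<forall>w\<in>QR_lattice. f (v + w) = f v + f w) \<and>
     (\<forall>v\<in>QR_lattice. \<forall>w\<in>QR_lattice. bform gram_E8_3 24 (f v) (f w) = bform gram_QR 24 v w) \<and>
     inj_on f QR_lattice"

definition E8_3_automorphism :: "((nat \<Rightarrow> int) \<Rightarrow> (nat \<Rightarrow> int)) \<Rightarrow> bool" where
  "E8_3_automorphism s \<longleftrightarrow>
     bij_betw s E8_3 E8_3 \<and>
     (\<forall>v\<in>E8_3. \<forall>w\<in>E8_3. s (v + w) = s v + s w) \<and>
     (\<forall>v\<in>E8_3. \<forall>w\<in>E8_3. bform gram_E8_3 24 (s v) (s w) = bform gram_E8_3 24 v w)"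

definition has_order_3 :: "((nat \<Rightarrow> int) \<Rightarrow> (nat \<Rightarrow> int)) \<Rightarrow> bool" where
  "has_order_3 s \<longleftrightarrow> (\<forall>v\<in>E8_3. s (s (s v)) = v) \<and> (\<exists>v\<in>E8_3. s v \<noteq> v)"

definition permutes_summands_cyclically :: "((nat \<Rightarrow> int) \<Rightarrow> (nat \<Rightarrow> int)) \<Rightarrow> bool" where
  "permutes_summands_cyclically s \<longleftrightarrow>
     (\<exists>c\<in>{1,2::nat}. \<forall>b<3. s ` E8_3_summand b = E8_3_summand ((b + c) mod 3))"

definition fixed_sublattice :: "((nat \<Rightarrow> int) \<Rightarrow> (nat \<Rightarrow> int)) \<Rightarrow> (nat \<Rightarrow> int) set" where
  "fixed_sublattice s = {v \<in> E8_3. s v = v}"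

definition rat_span :: "(nat \<Rightarrow> int) set \<Rightarrow> (nat \<Rightarrow> rat) set" where
  "rat_span L = {x. \<exists>S c. finite S \<and> S \<subseteq> L \<and>
                       x = (\<lambda>i. \<Sum>v\<in>S. c v * of_int (v i))}"

definition rat_span_inter_E8_3 :: "(nat \<Rightarrow> int) set \<Rightarrow> (nat \<Rightarrow> int) set" where
  "rat_span_inter_E8_3 M = {x \<in> E8_3. (\<lambda>i. (of_int (x i) :: rat)) \<in> rat_span M}"

definition is_subgroup_of_E8_3 :: "(nat \<Rightarrow> int) set \<Rightarrow> bool" where
  "is_subgroup_of_E8_3 N \<longleftrightarrow> N \<subseteq> E8_3 \<and> 0 \<in> N \<and>
     (\<forall>a\<in>N. \<forall>b\<in>N. a + b \<in> N) \<and> (\<forall>a\<in>N. - a \<in> N)"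

definition orthogonal_direct_summand :: "(nat \<Rightarrow> int) set \<Rightarrow> bool" where
  "orthogonal_direct_summand N \<longleftrightarrow>
     is_subgroup_of_E8_3 N \<and>
     (\<exists>N'. is_subgroup_of_E8_3 N' \<and>
        (\<forall>a\<in>N. \<forall>b\<in>N'. bform gram_E8_3 24 a b = 0) \<and>
        (\<forall>x\<in>E8_3. \<exists>!p. fst p \<in> N \<and> snd p \<in> N' \<and> x = fst p + snd p))"

end

theory Submission
  imports Defs
begin

definition B :: "(nat\<Rightarrow>int) \<Rightarrow> (nat\<Rightarrow>int) \<Rightarrow> int" where
  "B x y = (\<Sum>k<8. \<Sum>l<8. x k * gram_E8 k l * y l)"
definition blk :: "nat \<Rightarrow> (nat\<Rightarrow>int) \<Rightarrow> nat \<Rightarrow> int" where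
  "blk a v = (\<lambda>k. v (8*a+k))"

lemma sum24: "(\<Sum>i<24. g i) = (\<Sum>a<3. \<Sum>k<8. g (8*a+k::nat)) " for g :: "nat \<Rightarrow> int"
  by (simp add: eval_nat_numeral)

lemma bform_blocks: "bform G 24 X Y = (\<Sum>a<3. \<Sum>b<3. \<Sum>k<8. \<Sum>l<8. X(8*a+k) * G (8*a+k) (8*b+l) * Y(8*b+l))"
proof -
  have "bform G 24 X Y = (\<Sum>a<3. \<Sum>k<8. \<Sum>b<3. \<Sum>l<8. X(8*a+k) * G (8*a+k) (8*b+l) * Y(8*b+l))"
    unfolding bform_def sum24 ..
  also have "\<dots> = (\<Sum>a<3. \<Sum>b<3. \<Sum>k<8. \<Sum>l<8. X(8*a+k) * G (8*a+k) (8*b+l) * Y(8*b+l))"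
    by (rule sum.cong[OF refl], rule sum.swap)
  finally show ?thesis .
qed

lemma g3: "k<8 \<Longrightarrow> l<8 \<Longrightarrow> gram_E8_3 (8*a+k) (8*b+l) = (if a = b then gram_E8 k l else 0)"
  unfolding gram_E8_3_def by simp

lemma blockE3: "(\<Sum>k<8. \<Sum>l<8. X(8*a+k) * gram_E8_3 (8*a+k) (8*b+l) * Y(8*b+l)) = (if a = b then B (blk a X) (blk b Y) else 0)"
  unfolding B_def blk_def by (auto simp: g3 intro!: sum.cong)

lemma bform_E3: "bform gram_E8_3 24 X Y = B (blk 0 X) (blk 0 Y) + B (blk 1 X) (blk 1 Y) + B (blk 2 X) (blk 2 Y)"
  unfolding bform_blocks blockE3 by (simp add: eval_nat_numeral)

definition cQR :: "nat \<Rightarrow> nat \<Rightarrow> int" where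
  "cQR a b = (if a < 2 \<and> b < 2 then gram_A2 a b else if a = 2 \<and> b = 2 then 3 else 0)"

lemma gQR: "k<8 \<Longrightarrow> l<8 \<Longrightarrow> a<3 \<Longrightarrow> b < 3 \<Longrightarrow> gram_QR (8*a+k) (8*b+l) = cQR a b * gram_E8 k l"
proof -
  assume k: "k<8" and l: "l<8" and a: "a<3" and b: "b<3"
  have a3: "a = 0 \<or> a = 1 \<or> a = 2" using a by auto
  have b3: "b = 0 \<or> b = 1 \<or> b = 2" using b by auto
  show ?thesis using a3 b3 k l
    unfolding gram_QR_def cQR_def gram_Q_def gram_R_def
    by (elim disjE) (auto simp: gram_A2_def)
qed

lemma blockQR: "a<3 \<Longrightarrow> b<3 \<Longrightarrow> (\<Sum>k<8. \<Sum>l<8. X(8*a+k) * gram_QR (8*a+k) (8*b+l) * Y(8*b+l)) = cQR a b * B (blk a X) (blk b Y)"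
proof -
  assume a: "a<3" and b: "b<3"
  have "(\<Sum>k<8. \<Sum>l<8. X(8*a+k) * gram_QR (8*a+k) (8*b+l) * Y(8*b+l)) =
        (\<Sum>k<8. \<Sum>l<8. cQR a b * (X (8*a+k) * gram_E8 k l * Y (8*b+l)))"
    by (intro sum.cong refl) (simp add: gQR a b)
  then show ?thesis by (simp add: B_def blk_def sum_distrib_left)
qed

lemma sum3: "(\<Sum>a<(3::nat). g a) = g 0 + g 1 + (g 2 :: int)"
  by (simp add: eval_nat_numeral One_nat_def)

lemma bform_QR: "bform gram_QR 24 X Y = 2 * B (blk 0 X) (blk 0 Y) - B (blk 0 X) (blk 1 Y) - B (blk 1 X) (blk 0 Y) + 2 * B (blk 1 X) (blk 1 Y) + 3 * B (blk 2 X) (blk 2 Y)"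
  unfolding bform_blocks sum3 using blockQR[of 0 0 X Y] blockQR[of 0 1 X Y] blockQR[of 0 2 X Y] blockQR[of 1 0 X Y] blockQR[of 1 1 X Y] blockQR[of 1 2 X Y] blockQR[of 2 0 X Y] blockQR[of 2 1 X Y] blockQR[of 2 2 X Y] by (simp add: cQR_def gram_A2_def)

lemma B_add1: "B (x + y) z = B x z + B y z" unfolding B_def by (simp add: algebra_simps sum.distrib)
lemma B_add2: "B z (x + y) = B z x + B z y" unfolding B_def by (simp add: algebra_simps sum.distrib)
lemma B_diff1: "B (x - y) z = B x z - B y z" unfolding B_def by (simp add: algebra_simps sum_subtractf)
lemma B_diff2: "B z (x - y) = B z x - B z y" unfolding B_def by (simp add: algebra_simps sum_subtractf)
lemma B_cong: "(\<And>k. k<8 \<Longrightarrow> x k = x' k) \<Longrightarrow> (\<And>k. k<8 \<Longrightarrow> y k = y' k) \<Longrightarrow> B x y = B x' y'"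
  unfolding B_def by (auto intro!: sum.cong)
lemma B_zero1: "(\<And>k. k<8 \<Longrightarrow> x k = 0) \<Longrightarrow> B x y = 0"
  unfolding B_def by auto
lemma B_zero2: "(\<And>k. k<8 \<Longrightarrow> y k = 0) \<Longrightarrow> B x y = 0"
  unfolding B_def by auto

lemma div8_0: "(i::nat) div 8 = 0 \<longleftrightarrow> i < 8" by presburger
lemma div8_1: "(i::nat) div 8 = 1 \<longleftrightarrow> 8 \<le> i \<and> i < 16" by presburger
lemma div8_2: "(i::nat) div 8 = 2 \<longleftrightarrow> 16 \<le> i \<and> i < 24" by presburger

lemma summand0: "v \<in> E8_3_summand 0 \<longleftrightarrow> (\<forall>i. 8 \<le> i \<longrightarrow> v i = 0)"
  unfolding E8_3_summand_def zvecs_def div8_0 by auto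
lemma summand1: "v \<in> E8_3_summand 1 \<longleftrightarrow> (\<forall>i. (i < 8 \<or> 16 \<le> i) \<longrightarrow> v i = 0)"
  unfolding E8_3_summand_def zvecs_def div8_1 by auto
lemma summand2: "v \<in> E8_3_summand 2 \<longleftrightarrow> (\<forall>i. (i < 16 \<or> 24 \<le> i) \<longrightarrow> v i = 0)"
  unfolding E8_3_summand_def zvecs_def div8_2 by auto
lemma summand1': "v \<in> E8_3_summand (Suc 0) \<longleftrightarrow> (\<forall>i. (i < 8 \<or> 16 \<le> i) \<longrightarrow> v i = 0)"
  using summand1 by simp
lemma Rpart: "v \<in> R_part \<longleftrightarrow> (\<forall>i. (i < 16 \<or> 24 \<le> i) \<longrightarrow> v i = 0)"
  unfolding R_part_def zvecs_def by auto
lemma zv: "v \<in> zvecs 24 \<longleftrightarrow> (\<forall>i. 24 \<le> i \<longrightarrow> v i = 0)"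
  unfolding zvecs_def by auto

section \<open>Part (i)\<close>

definition f1 :: "(nat\<Rightarrow>int) \<Rightarrow> nat \<Rightarrow> int" where
  "f1 v = (\<lambda>i. if i < 8 then v i + v (i+16) else if i < 16 then v i + v (i+8) - v (i-8)
     else if i < 24 then v i - v (i-8) else 0)"

definition s1 :: "(nat\<Rightarrow>int) \<Rightarrow> nat \<Rightarrow> int" where
  "s1 v = (\<lambda>i. if i < 8 then v (i+16) else if i < 24 then v (i-8) else v i)"

definition t1 :: "(nat\<Rightarrow>int) \<Rightarrow> nat \<Rightarrow> int" where
  "t1 v = (\<lambda>i. if i < 16 then v (i+8) else if i < 24 then v (i-16) else v i)"

lemma f1_form: "bform gram_E8_3 24 (f1 v) (f1 w) = bform gram_QR 24 v w"
proof -
  have e0: "B (blk 0 (f1 v)) (blk 0 (f1 w)) = B (blk 0 v + blk 2 v) (blk 0 w + blk 2 w)"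
    by (rule B_cong) (auto simp: blk_def f1_def add.commute)
  have e1: "B (blk 1 (f1 v)) (blk 1 (f1 w)) = B (blk 1 v + blk 2 v - blk 0 v) (blk 1 w + blk 2 w - blk 0 w)"
    by (rule B_cong) (auto simp: blk_def f1_def add.commute)
  have e2: "B (blk 2 (f1 v)) (blk 2 (f1 w)) = B (blk 2 v - blk 1 v) (blk 2 w - blk 1 w)"
    by (rule B_cong) (auto simp: blk_def f1_def add.commute)
  show ?thesis unfolding bform_E3 bform_QR e0 e1 e2
    by (simp add: B_add1 B_add2 B_diff1 B_diff2 algebra_simps)
qed

lemma f1_inj: "inj_on f1 QR_lattice"
proof (rule inj_onI)
  fix v w assume v: "v \<in> QR_lattice" and w: "w \<in> QR_lattice" and e: "f1 v = f1 w"
  have k: "v k = w k \<and> v (k+8) = w (k+8) \<and> v (k+16) = w (k+16)" if "k<8" for k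
  proof -
    have "v k + v (k+16) = w k + w (k+16)"
      using e[THEN fun_cong, of k] that by (simp add: f1_def add.commute)
    moreover have "v (k+8) + v (k+16) - v k = w (k+8) + w (k+16) - w k"
      using e[THEN fun_cong, of "k+8"] that by (simp add: f1_def add.commute)
    moreover have "v (k+16) - v (k+8) = w (k+16) - w (k+8)"
      using e[THEN fun_cong, of "k+16"] that by (simp add: f1_def add.commute)
    ultimately show ?thesis by linarith
  qed
  show "v = w"
  proof
    fix i show "v i = w i"
    proof (cases "i < 24")
      case True
      then have "i < 8 \<or> (8 \<le> i \<and> i < 16) \<or> (16 \<le> i \<and> i < 24)" by auto
      then show ?thesis
      proof (elim disjE)
        assume "i < 8" then show ?thesis using k[of i] by auto
      next
        assume a: "8 \<le> i \<and> i < 16" then show ?thesis using k[of "i-8"] by auto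
      next
        assume a: "16 \<le> i \<and> i < 24" then show ?thesis using k[of "i-16"] by auto
      qed
    next
      case False then show ?thesis using v w by (simp add: QR_lattice_def zvecs_def)
    qed
  qed
qed

lemma f1_iso: "isometric_embedding f1"
  unfolding isometric_embedding_def
proof (intro conjI ballI)
  show "f1 ` QR_lattice \<subseteq> E8_3" by (auto simp: E8_3_def zv f1_def)
  fix v w assume "v \<in> QR_lattice" "w \<in> QR_lattice"
  show "f1 (v + w) = f1 v + f1 w" by (auto simp: f1_def fun_eq_iff)
  show "bform gram_E8_3 24 (f1 v) (f1 w) = bform gram_QR 24 v w" by (rule f1_form)
next
  show "inj_on f1 QR_lattice" by (rule f1_inj)
qed

lemma s1_form: "bform gram_E8_3 24 (s1 v) (s1 w) = bform gram_E8_3 24 v w"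
proof -
  have e0: "B (blk 0 (s1 v)) (blk 0 (s1 w)) = B (blk 2 v) (blk 2 w)"
    by (rule B_cong) (auto simp: blk_def s1_def add.commute)
  have e1: "B (blk 1 (s1 v)) (blk 1 (s1 w)) = B (blk 0 v) (blk 0 w)"
    by (rule B_cong) (auto simp: blk_def s1_def add.commute)
  have e2: "B (blk 2 (s1 v)) (blk 2 (s1 w)) = B (blk 1 v) (blk 1 w)"
    by (rule B_cong) (auto simp: blk_def s1_def add.commute)
  show ?thesis unfolding bform_E3 e0 e1 e2 by simp
qed

lemma s1_t1: "s1 (t1 v) = v" by (auto simp: s1_def t1_def fun_eq_iff)
lemma t1_s1: "t1 (s1 v) = v" by (auto simp: s1_def t1_def fun_eq_iff)

lemma s1_aut: "E8_3_automorphism s1"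
  unfolding E8_3_automorphism_def
proof (intro conjI ballI)
  show "bij_betw s1 E8_3 E8_3"
    by (rule bij_betw_byWitness[where f'=t1]) (auto simp: s1_t1 t1_s1 E8_3_def zv s1_def t1_def)
  fix v w assume "v \<in> E8_3" "w \<in> E8_3"
  show "s1 (v + w) = s1 v + s1 w" by (auto simp: s1_def fun_eq_iff)
  show "bform gram_E8_3 24 (s1 v) (s1 w) = bform gram_E8_3 24 v w" by (rule s1_form)
qed

lemma s1_ord: "has_order_3 s1"
  unfolding has_order_3_def
proof (intro conjI ballI)
  fix v show "s1 (s1 (s1 v)) = v" by (auto simp: s1_def fun_eq_iff)
next
  let ?v = "(\<lambda>i. if i = 0 then 1 else 0) :: nat \<Rightarrow> int"
  have "?v \<in> E8_3" by (simp add: E8_3_def zv)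
  moreover have "s1 ?v \<noteq> ?v"
  proof
    assume "s1 ?v = ?v" then have "s1 ?v 0 = ?v 0" by simp
    then show False by (simp add: s1_def)
  qed
  ultimately show "\<exists>v\<in>E8_3. s1 v \<noteq> v" by blast
qed

lemma img_eq: "(\<And>v. v \<in> S \<Longrightarrow> s1 v \<in> T) \<Longrightarrow> (\<And>w. w \<in> T \<Longrightarrow> t1 w \<in> S) \<Longrightarrow> s1 ` S = T"
  by (metis (no_types, lifting) image_subset_iff s1_t1 subsetI subset_antisym image_eqI)

lemma s1_cyc: "permutes_summands_cyclically s1"
  unfolding permutes_summands_cyclically_def
proof (rule bexI[of _ 1])
  show "\<forall>b<3. s1 ` E8_3_summand b = E8_3_summand ((b + 1) mod 3)"
  proof (intro allI impI)
    fix b :: nat assume "b < 3"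
    then have "b = 0 \<or> b = 1 \<or> b = 2" by auto
    then show "s1 ` E8_3_summand b = E8_3_summand ((b + 1) mod 3)"
    proof (elim disjE)
      assume b: "b = 0"
      have "s1 ` E8_3_summand 0 = E8_3_summand 1"
        by (rule img_eq) (auto simp: summand0 summand1 summand1' s1_def t1_def)
      then show ?thesis using b by simp
    next
      assume b: "b = 1"
      have "s1 ` E8_3_summand 1 = E8_3_summand 2"
        by (rule img_eq) (auto simp: summand2 summand1 summand1' s1_def t1_def)
      then show ?thesis using b by (simp add: numeral_2_eq_2)
    next
      assume b: "b = 2"
      have "s1 ` E8_3_summand 2 = E8_3_summand 0"
        by (rule img_eq) (auto simp: summand0 summand2 s1_def t1_def)
      then show ?thesis using b by simp
    qed
  qed
qed simp

lemma s1_fix: "f1 ` R_part = fixed_sublattice s1"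
proof
  show "f1 ` R_part \<subseteq> fixed_sublattice s1"
  proof
    fix x assume "x \<in> f1 ` R_part"
    then obtain v where v: "v \<in> R_part" and x: "x = f1 v" by auto
    have z1: "\<And>i. i < 16 \<Longrightarrow> v i = 0" using v by (auto simp: Rpart)
    have z2: "\<And>i. 24 \<le> i \<Longrightarrow> v i = 0" using v by (auto simp: Rpart)
    have fv: "f1 v = (\<lambda>i. if i<8 then v (i+16) else if i<16 then v (i+8) else if i<24 then v i else 0)"
      by (auto simp: f1_def fun_eq_iff z1 z2)
    show "x \<in> fixed_sublattice s1"
      unfolding fixed_sublattice_def x fv by (auto simp: E8_3_def zv s1_def fun_eq_iff add.commute)
  qed
next
  show "fixed_sublattice s1 \<subseteq> f1 ` R_part"
  proof
    fix v assume "v \<in> fixed_sublattice s1"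
    then have v: "v \<in> E8_3" and sv: "s1 v = v" by (auto simp: fixed_sublattice_def)
    have sv': "\<And>i. s1 v i = v i" using sv by simp
    have z: "\<And>i. 24 \<le> i \<Longrightarrow> v i = 0" using v by (auto simp: E8_3_def zv)
    define r where "r = (\<lambda>i. if 16 \<le> i \<and> i < 24 then v (i-16) else (0::int))"
    have r: "r \<in> R_part" by (auto simp: Rpart r_def)
    have "f1 r = v"
    proof
      fix i
      show "f1 r i = v i"
      proof (cases "i < 24")
        case False then show ?thesis by (simp add: f1_def z)
      next
        case True
        then have "i < 8 \<or> (8 \<le> i \<and> i < 16) \<or> (16 \<le> i \<and> i < 24)" by auto
        then show ?thesis
        proof (elim disjE)
          assume "i < 8" then show ?thesis by (simp add: f1_def r_def)
        next
          assume a: "8 \<le> i \<and> i < 16"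
          have "v i = v (i-8)" using sv'[of i] a by (simp add: s1_def)
          then show ?thesis using a by (auto simp add: f1_def r_def)
        next
          assume a: "16 \<le> i \<and> i < 24"
          have "v i = v (i-8)" using sv'[of i] a by (simp add: s1_def)
          moreover have "v (i-8) = v (i-16)"
          proof -
            have c: "\<not> (i - 8 < 8)" "i - 8 < 24" using a by auto
            then have "s1 v (i-8) = v (i-8-8)" by (simp add: s1_def)
            then have "v (i-8) = v (i-8-8)" using sv'[of "i-8"] by simp
            moreover have "i - 8 - 8 = i - 16" by simp
            ultimately show ?thesis by simp
          qed
          ultimately show ?thesis using a by (auto simp add: f1_def r_def)
        qed
      qed
    qed
    then show "v \<in> f1 ` R_part" using r by auto
  qed
qed

section \<open>Part (ii)\<close>

definition Mm :: "(nat\<Rightarrow>int) \<Rightarrow> nat \<Rightarrow> int" where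
  "Mm x = (\<lambda>k. if k = 0 then x 3 - x 4 - x 6 else if k = 1 then x 0 + x 3 - x 4 - x 5 - x 7 else if k = 2 then x 0 + x 1 + x 3 - 2 * x 4 - x 6 - x 7 else if k = 3 then x 0 + x 1 + x 2 + x 3 - 2 * x 4 - x 5 - x 6 - 2 * x 7 else if k = 4 then x 0 + x 1 + x 2 + x 3 - 2 * x 4 - x 5 - x 6 - x 7 else if k = 5 then x 0 + x 1 + x 3 - x 4 - x 5 - x 6 - x 7 else if k = 6 then x 0 + x 3 - x 4 - x 6 - x 7 else if k = 7 then x 3 - x 4 - x 7 else 0)"

lemma gE: "gram_E8 i j = (if i = j then 2 else if (i=0 \<and> j=2) \<or> (i=2\<and>j=0) \<or> (i=1 \<and> j=3) \<or> (i=3\<and>j=1)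
   \<or> (i=2\<and>j=3) \<or> (i=3\<and>j=2) \<or> (i=3\<and>j=4) \<or> (i=4\<and>j=3) \<or> (i=4\<and>j=5) \<or> (i=5\<and>j=4)
   \<or> (i=5\<and>j=6) \<or> (i=6\<and>j=5) \<or> (i=6\<and>j=7) \<or> (i=7\<and>j=6) then -1 else 0)"
  unfolding gram_E8_def e8_edge_def by (auto simp: doubleton_eq_iff)

lemma B_expand: "B x y = 2 * x 0 * y 0 - x 0 * y 2 + 2 * x 1 * y 1 - x 1 * y 3 - x 2 * y 0 + 2 * x 2 * y 2 - x 2 * y 3 - x 3 * y 1 - x 3 * y 2 + 2 * x 3 * y 3 - x 3 * y 4 - x 4 * y 3 + 2 * x 4 * y 4 - x 4 * y 5 - x 5 * y 4 + 2 * x 5 * y 5 - x 5 * y 6 - x 6 * y 5 + 2 * x 6 * y 6 - x 6 * y 7 - x 7 * y 6 + 2 * x 7 * y 7"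
  unfolding B_def by (simp add: lessThan_nat_numeral gE algebra_simps)

lemma BM1: "B (Mm x) (Mm y) = B x y"
  unfolding B_expand by (simp add: Mm_def algebra_simps)
lemma BM2: "B (Mm x) y = - B x y - B x (Mm y)"
  unfolding B_expand by (simp add: Mm_def algebra_simps)

definition th :: "(nat\<Rightarrow>int) \<Rightarrow> nat \<Rightarrow> int" where
  "th x = x + Mm x + Mm x"

lemma less8: "(k::nat) < 8 \<Longrightarrow> k = 0 \<or> k = 1 \<or> k = 2 \<or> k = 3 \<or> k = 4 \<or> k = 5 \<or> k = 6 \<or> k = 7"
  by auto

lemma Mm_add: "Mm (x + y) = Mm x + Mm y" by (simp add: Mm_def fun_eq_iff algebra_simps)
lemma Mm_diff: "Mm (x - y) = Mm x - Mm y" by (simp add: Mm_def fun_eq_iff algebra_simps)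
lemma Mm_zero: "Mm 0 = 0" by (simp add: Mm_def fun_eq_iff)
lemma th_add: "th (x + y) = th x + th y" by (simp add: th_def Mm_add algebra_simps)
lemma Mm_cong8: "(\<And>k. k<8 \<Longrightarrow> x k = y k) \<Longrightarrow> Mm x = Mm y"
proof -
  assume a: "\<And>k. k<8 \<Longrightarrow> x k = y k"
  have "x 0 = y 0" "x 1 = y 1" "x 2 = y 2" "x 3 = y 3" "x 4 = y 4" "x 5 = y 5" "x 6 = y 6" "x 7 = y 7"
    by (simp_all add: a)
  then show ?thesis unfolding Mm_def by (simp only:)
qed
lemma th_cong8: "(\<And>k. k<8 \<Longrightarrow> x k = y k) \<Longrightarrow> k < 8 \<Longrightarrow> th x k = th y k"
  unfolding th_def using Mm_cong8[of x y] by simp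
lemma th_th: "k < 8 \<Longrightarrow> th (th x) k = -3 * x k"
  by (drule less8) (auto simp: th_def Mm_def)
lemma th_inj8: "(\<And>k. k<8 \<Longrightarrow> th x k = th y k) \<Longrightarrow> k < 8 \<Longrightarrow> x k = y k"
proof -
  assume a: "\<And>k. k<8 \<Longrightarrow> th x k = th y k" and k: "k < 8"
  have "th (th x) k = th (th y) k" by (rule th_cong8[OF a k])
  then show ?thesis using k by (simp add: th_th)
qed

definition f2 :: "(nat\<Rightarrow>int) \<Rightarrow> nat \<Rightarrow> int" where
  "f2 v = (\<lambda>i. if i < 8 then th (blk 2 v) i else if i < 16 then (blk 0 v + Mm (blk 1 v)) (i-8)
     else if i < 24 then (blk 0 v - blk 1 v - Mm (blk 1 v)) (i-16) else 0)"

lemma blk_add: "blk a (v + w) = blk a v + blk a w" by (simp add: blk_def fun_eq_iff)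

lemma f2_form: "bform gram_E8_3 24 (f2 v) (f2 w) = bform gram_QR 24 v w"
proof -
  have e0: "B (blk 0 (f2 v)) (blk 0 (f2 w)) = B (th (blk 2 v)) (th (blk 2 w))"
    by (rule B_cong) (auto simp: blk_def f2_def)
  have e1: "B (blk 1 (f2 v)) (blk 1 (f2 w)) = B (blk 0 v + Mm (blk 1 v)) (blk 0 w + Mm (blk 1 w))"
    by (rule B_cong) (auto simp: f2_def blk_def)
  have e2: "B (blk 2 (f2 v)) (blk 2 (f2 w)) = B (blk 0 v - blk 1 v - Mm (blk 1 v)) (blk 0 w - blk 1 w - Mm (blk 1 w))"
    by (rule B_cong) (auto simp: f2_def blk_def)
  show ?thesis unfolding bform_E3 bform_QR e0 e1 e2 th_def
    apply (simp only: B_add1 B_add2 B_diff1 B_diff2)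
    apply (simp only: BM1)
    apply (simp only: BM2)
    done
qed

lemma f2_inj: "inj_on f2 QR_lattice"
proof (rule inj_onI)
  fix v w assume v: "v \<in> QR_lattice" and w: "w \<in> QR_lattice" and e: "f2 v = f2 w"
  have h0: "th (blk 2 v) k = th (blk 2 w) k" if "k<8" for k
    using e[THEN fun_cong, of k] that by (simp add: f2_def)
  have h1: "blk 0 v k + Mm (blk 1 v) k = blk 0 w k + Mm (blk 1 w) k" if "k<8" for k
    using e[THEN fun_cong, of "k+8"] that by (simp add: f2_def)
  have h2: "blk 0 v k - blk 1 v k - Mm (blk 1 v) k = blk 0 w k - blk 1 w k - Mm (blk 1 w) k" if "k<8" for k
    using e[THEN fun_cong, of "k+16"] that by (simp add: f2_def)
  have b2: "blk 2 v k = blk 2 w k" if "k<8" for k by (rule th_inj8[OF h0 that])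
  have h12: "th (blk 1 v) k = th (blk 1 w) k" if "k<8" for k
    using h1[OF that] h2[OF that] by (simp add: th_def)
  have b1: "blk 1 v k = blk 1 w k" if "k<8" for k by (rule th_inj8[OF h12 that])
  have "Mm (blk 1 v) = Mm (blk 1 w)" by (rule Mm_cong8[OF b1])
  then have b0: "blk 0 v k = blk 0 w k" if "k<8" for k using h1[OF that] by simp
  show "v = w"
  proof
    fix i show "v i = w i"
    proof (cases "i < 24")
      case True
      then have "i < 8 \<or> (8 \<le> i \<and> i < 16) \<or> (16 \<le> i \<and> i < 24)" by auto
      then show ?thesis
      proof (elim disjE)
        assume "i < 8" then show ?thesis using b0[of i] by (auto simp: blk_def)
      next
        assume a: "8 \<le> i \<and> i < 16" then show ?thesis using b1[of "i-8"] by (auto simp: blk_def)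
      next
        assume a: "16 \<le> i \<and> i < 24" then show ?thesis using b2[of "i-16"] by (auto simp: blk_def)
      qed
    next
      case False then show ?thesis using v w by (simp add: QR_lattice_def zvecs_def)
    qed
  qed
qed

lemma f2_iso: "isometric_embedding f2"
  unfolding isometric_embedding_def
proof (intro conjI ballI)
  show "f2 ` QR_lattice \<subseteq> E8_3" by (auto simp: E8_3_def zv f2_def)
  fix v w assume "v \<in> QR_lattice" "w \<in> QR_lattice"
  show "f2 (v + w) = f2 v + f2 w" by (auto simp: f2_def fun_eq_iff blk_add Mm_add th_add)
  show "bform gram_E8_3 24 (f2 v) (f2 w) = bform gram_QR 24 v w" by (rule f2_form)
next
  show "inj_on f2 QR_lattice" by (rule f2_inj)
qed

lemma f2_R: "r \<in> R_part \<Longrightarrow> f2 r = (\<lambda>i. if i < 8 then th (blk 2 r) i else 0)"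
proof -
  assume r: "r \<in> R_part"
  have z1: "\<And>i. i < 16 \<Longrightarrow> r i = 0" using r by (auto simp: Rpart)
  have m: "Mm (blk 1 r) = 0"
  proof -
    have "Mm (blk 1 r) = Mm 0" by (rule Mm_cong8) (simp add: blk_def z1)
    then show ?thesis by (simp add: Mm_zero)
  qed
  have b0: "\<And>k. k < 8 \<Longrightarrow> blk 0 r k = 0" by (simp add: blk_def z1)
  have b1: "\<And>k. k < 8 \<Longrightarrow> blk 1 r k = 0" by (simp add: blk_def z1)
  have m': "Mm (blk (Suc 0) r) = 0" using m by simp
  have b1': "\<And>k. k < 8 \<Longrightarrow> blk (Suc 0) r k = 0" using b1 by simp
  show ?thesis by (auto simp: f2_def fun_eq_iff m b0 b1 m' b1')
qed

lemma span_eq: "rat_span_inter_E8_3 (f2 ` R_part) = E8_3_summand 0"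
proof
  show "rat_span_inter_E8_3 (f2 ` R_part) \<subseteq> E8_3_summand 0"
  proof
    fix x assume "x \<in> rat_span_inter_E8_3 (f2 ` R_part)"
    then obtain S c where S: "finite S" "S \<subseteq> f2 ` R_part"
      and xe: "(\<lambda>i. (of_int (x i) :: rat)) = (\<lambda>i. \<Sum>v\<in>S. c v * of_int (v i))"
      by (auto simp: rat_span_inter_E8_3_def rat_span_def)
    have "x i = 0" if "8 \<le> i" for i
    proof -
      have "\<And>v. v \<in> S \<Longrightarrow> v i = 0" using S(2) that by (auto simp: f2_R)
      then have "(\<Sum>v\<in>S. c v * (of_int (v i) :: rat)) = 0" by (auto intro!: sum.neutral)
      then have "(of_int (x i) :: rat) = 0" using xe[THEN fun_cong, of i] by simp
      then show ?thesis by simp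
    qed
    then show "x \<in> E8_3_summand 0" by (simp add: summand0)
  qed
next
  show "E8_3_summand 0 \<subseteq> rat_span_inter_E8_3 (f2 ` R_part)"
  proof
    fix x assume x: "x \<in> E8_3_summand 0"
    have z: "\<And>i. 8 \<le> i \<Longrightarrow> x i = 0" using x by (simp add: summand0)
    define r where "r = (\<lambda>i. if 16 \<le> i \<and> i < 24 then th x (i-16) else (0::int))"
    have r: "r \<in> R_part" by (auto simp: Rpart r_def)
    have "f2 r = (\<lambda>i. -3 * x i)"
    proof
      fix i
      show "f2 r i = -3 * x i"
      proof (cases "i < 8")
        case True
        have "th (blk 2 r) i = th (th x) i"
          by (rule th_cong8[OF _ True]) (simp add: blk_def r_def)
        then show ?thesis using True by (simp add: f2_R[OF r] th_th)
      next
        case False then show ?thesis by (simp add: f2_R[OF r] z)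
      qed
    qed
    then have eq: "(\<lambda>i. (of_int (x i) :: rat)) = (\<lambda>i. \<Sum>v\<in>{f2 r}. (\<lambda>_. - 1/3 :: rat) v * of_int (v i))"
      by (simp add: fun_eq_iff)
    have sub: "{f2 r} \<subseteq> f2 ` R_part" using r by auto
    have "(\<lambda>i. (of_int (x i) :: rat)) \<in> rat_span (f2 ` R_part)"
      unfolding rat_span_def
      apply (rule CollectI, rule exI[of _ "{f2 r}"], rule exI[of _ "\<lambda>_. - 1/3 :: rat"])
      using eq sub by blast
    moreover have "x \<in> E8_3" using z by (simp add: E8_3_def zv)
    ultimately show "x \<in> rat_span_inter_E8_3 (f2 ` R_part)"
      by (simp add: rat_span_inter_E8_3_def)
  qed
qed

lemma summand0_ods: "orthogonal_direct_summand (E8_3_summand 0)"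
  unfolding orthogonal_direct_summand_def
proof (intro conjI)
  show "is_subgroup_of_E8_3 (E8_3_summand 0)"
    by (auto simp: is_subgroup_of_E8_3_def summand0 E8_3_def zv)
  let ?N = "{v :: nat \<Rightarrow> int. \<forall>i. (i < 8 \<or> 24 \<le> i) \<longrightarrow> v i = 0}"
  show "\<exists>N'. is_subgroup_of_E8_3 N' \<and>
        (\<forall>a\<in>E8_3_summand 0. \<forall>b\<in>N'. bform gram_E8_3 24 a b = 0) \<and>
        (\<forall>x\<in>E8_3. \<exists>!p. fst p \<in> E8_3_summand 0 \<and> snd p \<in> N' \<and> x = fst p + snd p)"
  proof (intro exI[of _ ?N] conjI ballI)
    show "is_subgroup_of_E8_3 ?N"
      by (auto simp: is_subgroup_of_E8_3_def E8_3_def zv)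
  next
    fix a b assume a: "a \<in> E8_3_summand 0" and b: "b \<in> ?N"
    have za: "\<And>i. 8 \<le> i \<Longrightarrow> a i = 0" using a by (simp add: summand0)
    have zb: "\<And>i. i < 8 \<Longrightarrow> b i = 0" using b by simp
    have "B (blk 0 a) (blk 0 b) = 0" by (rule B_zero2) (simp add: blk_def zb)
    moreover have "B (blk 1 a) (blk 1 b) = 0" by (rule B_zero1) (simp add: blk_def za)
    moreover have "B (blk 2 a) (blk 2 b) = 0" by (rule B_zero1) (simp add: blk_def za)
    ultimately show "bform gram_E8_3 24 a b = 0" by (simp add: bform_E3)
  next
    fix x assume x: "x \<in> E8_3"
    let ?p = "((\<lambda>i. if i < 8 then x i else 0), (\<lambda>i. if i < 8 then 0 else x i))"
    show "\<exists>!p. fst p \<in> E8_3_summand 0 \<and> snd p \<in> ?N \<and> x = fst p + snd p"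
    proof (rule ex1I[of _ ?p])
      show "fst ?p \<in> E8_3_summand 0 \<and> snd ?p \<in> ?N \<and> x = fst ?p + snd ?p"
        using x by (auto simp: summand0 E8_3_def zv fun_eq_iff)
    next
      fix p assume p: "fst p \<in> E8_3_summand 0 \<and> snd p \<in> ?N \<and> x = fst p + snd p"
      then have z1: "\<And>i. 8 \<le> i \<Longrightarrow> fst p i = 0" and z2: "\<And>i. i < 8 \<Longrightarrow> snd p i = 0"
        and xs: "\<And>i. x i = fst p i + snd p i" by (auto simp: summand0)
      show "p = ?p"
      proof (rule prod_eqI)
        show "fst p = fst ?p" by (auto simp: fun_eq_iff z1 z2 xs)
        show "snd p = snd ?p" by (auto simp: fun_eq_iff z1 z2 xs)
      qed
    qed
  qed
qed

theorem lemma6p1: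
  shows "(\<exists>f s. isometric_embedding f \<and> E8_3_automorphism s \<and> has_order_3 s \<and>
                permutes_summands_cyclically s \<and> f ` R_part = fixed_sublattice s)
       \<and> (\<exists>f. isometric_embedding f \<and>
                orthogonal_direct_summand (rat_span_inter_E8_3 (f ` R_part)))"
  using f1_iso s1_aut s1_ord s1_cyc s1_fix f2_iso span_eq summand0_ods by metis

end
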